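(* Let $n\ge2$, $\mathbf b\in\mathbb R^{n-1}$ with $\mathbf b\notin\mathcal W^+_n(1,n-1)$, and $v>n$. For $Q>0$ let $\mathcal A(\mathbf b,v,Q)$ be the set of $x\in[0,1)$ for which $|p+(\tilde{\mathbf b}\mathbf q)x|<Q^{-v}$ for some $p\in\mathbb Z$ and $\mathbf q=(q_0,\dots,q_{n-1})^T\in\mathbb Z^n$ with $Q\le\|\mathbf q\|<2Q$, where $\tilde{\mathbf b}=(1,b_1,\dots,b_{n-1})$. Then there exists $C=C(\mathbf b,v)>0$ such that $|\mathcal A(\mathbf b,v,Q)|<CQ^{\frac{n-v}2}$ for all $Q>1$.
   Context: Sup-norms; $|\cdot|$ is Lebesgue measure. $\mathbf b\in\mathcal W_u(1,n-1)$ means there are infinitely many $\mathbf q\in\mathbb Z^{n-1}$ with $|\mathbf b\mathbf q+p|\le\|\mathbf q\|^{-u}$ for some $p\in\mathbb Z$; $\mathcal W^+_n(1,n-1)=\bigcup_{u>n}\mathcal W_u(1,n-1)$. *)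

theory Defs
  imports "HOL-Analysis.Analysis"
begin

(* Vectors of varying dimension are represented as functions on nat with an
   explicit index set. Sup-norm of an integer vector over index set I. *)
definition supnorm :: "nat set \<Rightarrow> (nat \<Rightarrow> int) \<Rightarrow> real" where
  "supnorm I q = real_of_int (Max ((\<lambda>i. \<bar>q i\<bar>) ` I))"

definition W_u :: "nat \<Rightarrow> real \<Rightarrow> (nat \<Rightarrow> real) \<Rightarrow> bool" where
  "W_u n u b \<longleftrightarrow>
     infinite {q :: nat \<Rightarrow> int. (\<forall>i. i \<notin> {1..n-1} \<longrightarrow> q i = 0) \<and>
       (\<exists>p::int. \<bar>(\<Sum>i\<in>{1..n-1}. b i * of_int (q i)) + of_int p\<bar>
                   \<le> supnorm {1..n-1} q powr (- u))}"

definition W_plus :: "nat \<Rightarrow> (nat \<Rightarrow> real) \<Rightarrow> bool" where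
  "W_plus n b \<longleftrightarrow> (\<exists>u > real n. W_u n u b)"

definition A_set :: "nat \<Rightarrow> (nat \<Rightarrow> real) \<Rightarrow> real \<Rightarrow> real \<Rightarrow> real set" where
  "A_set n b v Q = {x \<in> {0..<1}. \<exists>p::int. \<exists>q :: nat \<Rightarrow> int.
      (\<forall>i. i \<ge> n \<longrightarrow> q i = 0) \<and>
      Q \<le> supnorm {0..<n} q \<and> supnorm {0..<n} q < 2 * Q \<and>
      \<bar>of_int p + (of_int (q 0) + (\<Sum>i\<in>{1..n-1}. b i * of_int (q i))) * x\<bar> < Q powr (- v)}"

end

theory Submission
  imports Defs
begin

lemma Icc_lmeas: "{a..b::real} \<in> lmeasurable"
  by (metis cbox_interval lmeasurable_cbox)

lemma Icc_measure: "a \<le> b \<Longrightarrow> measure lebesgue {a..b::real} = b - a"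
  by (metis measure_completion measure_lborel_Icc sets_lborel atLeastAtMost_borel)

lemma strip_bound:
  fixes L eps :: real assumes L: "L \<noteq> 0" and e: "0 < eps" "eps \<le> 1"
  defines "K \<equiv> \<lfloor>\<bar>L\<bar>\<rfloor> + 1"
  defines "U \<equiv> \<Union>p\<in>{-K..K}. {-real_of_int p / L - eps/\<bar>L\<bar> .. -real_of_int p/L + eps/\<bar>L\<bar>}"
  shows "U \<in> lmeasurable" "measure lebesgue U \<le> 4*eps + 6*eps/\<bar>L\<bar>"
    "{x\<in>{0..<1}. \<exists>p::int. \<bar>of_int p + L*x\<bar> < eps} \<subseteq> U"
proof -
  show "U \<in> lmeasurable" unfolding U_def
    by (intro fmeasurable.finite_UN) (auto simp: Icc_lmeas)
  have "measure lebesgue U \<le> (\<Sum>p\<in>{-K..K}. measure lebesgue {-real_of_int p / L - eps/\<bar>L\<bar> .. -real_of_int p/L + eps/\<bar>L\<bar>})"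
    unfolding U_def by (rule measure_UNION_le) auto
  also have "\<dots> = (\<Sum>p\<in>{-K..K}. 2*eps/\<bar>L\<bar>)"
  proof (intro sum.cong refl)
    fix p :: int
    have h: "0 \<le> eps/\<bar>L\<bar>" using e by simp
    have "measure lebesgue {-real_of_int p / L - eps/\<bar>L\<bar> .. -real_of_int p/L + eps/\<bar>L\<bar>}
       = (-real_of_int p/L + eps/\<bar>L\<bar>) - (-real_of_int p / L - eps/\<bar>L\<bar>)"
      by (rule Icc_measure) (use h in linarith)
    thus "measure lebesgue {-real_of_int p / L - eps/\<bar>L\<bar> .. -real_of_int p/L + eps/\<bar>L\<bar>} = 2*eps/\<bar>L\<bar>"
      by simp
  qed
  also have "\<dots> = real_of_int (2*K+1) * (2*eps/\<bar>L\<bar>)"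
    unfolding K_def by simp
  also have "\<dots> \<le> (2*\<bar>L\<bar>+3) * (2*eps/\<bar>L\<bar>)"
  proof (rule mult_right_mono)
    show "real_of_int (2*K+1) \<le> 2*\<bar>L\<bar>+3" unfolding K_def using of_int_floor_le[of "\<bar>L\<bar>"] by simp
    show "0 \<le> 2*eps/\<bar>L\<bar>" using e by simp
  qed
  also have "\<dots> = 4*eps + 6*eps/\<bar>L\<bar>"
    using L by (simp add: field_simps)
  finally show "measure lebesgue U \<le> 4*eps + 6*eps/\<bar>L\<bar>" .
  show "{x\<in>{0..<1}. \<exists>p::int. \<bar>of_int p + L*x\<bar> < eps} \<subseteq> U"
  proof safe
    fix x :: real and p :: int
    assume x: "x \<in> {0..<1}" and p: "\<bar>of_int p + L*x\<bar> < eps"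
    have "\<bar>L*x\<bar> \<le> \<bar>L\<bar>" using x by (auto simp: abs_mult mult_left_le)
    hence "\<bar>real_of_int p\<bar> < \<bar>L\<bar> + 1" using p e by linarith
    hence "real_of_int (\<bar>p\<bar> - 1) \<le> \<bar>L\<bar>" by (simp only: of_int_diff of_int_abs of_int_1)
    hence "\<bar>p\<bar> - 1 \<le> \<lfloor>\<bar>L\<bar>\<rfloor>" by (simp only: le_floor_iff)
    hence "\<bar>p\<bar> \<le> K" unfolding K_def by linarith
    hence pK: "p \<in> {-K..K}" by auto
    have "of_int p + L*x = L * (x + real_of_int p / L)" using L by (simp add: field_simps)
    hence "\<bar>L\<bar> * \<bar>x + real_of_int p / L\<bar> < eps" using p by (simp add: abs_mult)
    hence "\<bar>x + real_of_int p / L\<bar> < eps / \<bar>L\<bar>" using L by (simp add: pos_less_divide_eq mult.commute)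
    hence "x \<in> {-real_of_int p / L - eps/\<bar>L\<bar> .. -real_of_int p/L + eps/\<bar>L\<bar>}"
      by (simp add: abs_less_iff)
    thus "x \<in> U" unfolding U_def using pK by blast
  qed
qed
definition Lf :: "nat \<Rightarrow> (nat \<Rightarrow> real) \<Rightarrow> (nat \<Rightarrow> int) \<Rightarrow> real" where
  "Lf n b q = of_int (q 0) + (\<Sum>i\<in>{1..n-1}. b i * of_int (q i))"

definition gval :: "real \<Rightarrow> real" where "gval y = min (frac y) (1 - frac y)"

lemma gval_le: "gval y \<le> \<bar>y + of_int p\<bar>"
proof -
  have y: "y = frac y + of_int \<lfloor>y\<rfloor>" by (simp add: frac_def)
  define m where "m = \<lfloor>y\<rfloor> + p"
  have "y + of_int p = frac y + of_int m" unfolding m_def by (subst y) simp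
  moreover have "gval y \<le> \<bar>frac y + of_int m\<bar>"
  proof (cases "m \<ge> 0")
    case True
    hence "frac y \<le> \<bar>frac y + of_int m\<bar>" using frac_ge_0[of y] by simp
    thus ?thesis unfolding gval_def by linarith
  next
    case False
    hence "of_int m \<le> (-1::real)" by simp
    hence "1 - frac y \<le> \<bar>frac y + of_int m\<bar>" using frac_lt_1[of y] by linarith
    thus ?thesis unfolding gval_def by linarith
  qed
  ultimately show ?thesis by simp
qed

lemma gval_pos: assumes "\<forall>p::int. y + of_int p \<noteq> 0" shows "gval y > 0"
proof -
  have "frac y \<noteq> 0"
  proof
    assume "frac y = 0"
    hence "y + of_int (- \<lfloor>y\<rfloor>) = 0" by (simp add: frac_def)
    thus False using assms by blast
  qed
  hence "frac y > 0" using frac_ge_0[of y] by linarith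
  thus ?thesis unfolding gval_def using frac_lt_1[of y] by simp
qed

lemma supnorm_attained:
  assumes "finite I" "I \<noteq> {}"
  obtains i where "i \<in> I" "supnorm I q = real_of_int \<bar>q i\<bar>"
proof -
  have "Max ((\<lambda>i. \<bar>q i\<bar>) ` I) \<in> (\<lambda>i. \<bar>q i\<bar>) ` I" using assms by (intro Max_in) auto
  thus ?thesis using that unfolding supnorm_def by auto
qed

lemma supnorm_ge:
  assumes "finite I" "i \<in> I" shows "real_of_int \<bar>q i\<bar> \<le> supnorm I q"
proof -
  have "\<bar>q i\<bar> \<le> Max ((\<lambda>i. \<bar>q i\<bar>) ` I)" by (rule Max_ge) (use assms in auto)
  thus ?thesis unfolding supnorm_def by (metis of_int_abs of_int_le_iff)
qed

lemma dioph:
  assumes n: "n \<ge> 2" and nW: "\<not> W_u n u b" and u: "u > 0"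
  shows "\<exists>c>0. c \<le> 1 \<and> (\<forall>d R. (\<forall>i. i \<ge> n \<longrightarrow> d i = 0) \<longrightarrow> d \<noteq> (\<lambda>_. 0) \<longrightarrow> R \<ge> 1 \<longrightarrow>
            (\<forall>i<n. real_of_int \<bar>d i\<bar> \<le> R) \<longrightarrow> \<bar>Lf n b d\<bar> \<ge> c * R powr (-u))"
proof -
  define I where "I = {1..n-1}"
  have I: "finite I" "I \<noteq> {}" using n by (auto simp: I_def)
  define E where "E = {q :: nat \<Rightarrow> int. (\<forall>i. i \<notin> {1..n-1} \<longrightarrow> q i = 0) \<and>
       (\<exists>p::int. \<bar>(\<Sum>i\<in>{1..n-1}. b i * of_int (q i)) + of_int p\<bar>
                   \<le> supnorm {1..n-1} q powr (- u))}"
  have finE: "finite E" using nW unfolding W_u_def E_def by simp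
  define y where "y = (\<lambda>q::nat\<Rightarrow>int. \<Sum>i\<in>I. b i * of_int (q i))"
  have indep: "y e + of_int p \<noteq> 0" if e: "e \<in> E" "e \<noteq> (\<lambda>_. 0)" for e p
  proof
    assume 0: "y e + of_int p = 0"
    define f where "f = (\<lambda>k::nat. \<lambda>i. int (Suc k) * e i)"
    have "range f \<subseteq> E"
    proof safe
      fix k
      have "y (f k) + of_int (int (Suc k) * p) = real (Suc k) * (y e + of_int p)"
        unfolding y_def f_def by (simp add: sum_distrib_left algebra_simps)
      also have "\<dots> = 0" using 0 by simp
      finally have "\<bar>y (f k) + of_int (int (Suc k) * p)\<bar> \<le> supnorm {1..n-1} (f k) powr (- u)" by simp
      hence bd: "\<bar>(\<Sum>i\<in>{1..n-1}. b i * of_int (f k i)) + of_int (int (Suc k) * p)\<bar> \<le> supnorm {1..n-1} (f k) powr (- u)"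
        by (simp add: y_def I_def)
      have supp: "\<forall>i. i \<notin> {1..n-1} \<longrightarrow> f k i = 0" using e(1) unfolding E_def f_def by auto
      show "f k \<in> E" unfolding E_def using bd supp by blast
    qed
    moreover have "inj f"
    proof
      fix k l assume "f k = f l"
      obtain i where "e i \<noteq> 0" using e(2) by auto
      have "int (Suc k) * e i = int (Suc l) * e i" using \<open>f k = f l\<close> unfolding f_def by metis
      thus "k = l" using \<open>e i \<noteq> 0\<close> by simp
    qed
    ultimately show False using finE range_inj_infinite finite_subset by metis
  qed
  define c where "c = Min (insert 1 ((\<lambda>e. gval (y e)) ` (E - {\<lambda>_. 0})))"
  have cfin: "finite (insert 1 ((\<lambda>e. gval (y e)) ` (E - {\<lambda>_. 0})))" using finE by simp
  have c1: "c \<le> 1" unfolding c_def using cfin by simp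
  have cpos: "c > 0" unfolding c_def using cfin
    by (subst Min_gr_iff) (use indep in \<open>auto intro!: gval_pos\<close>)
  have cle: "c \<le> gval (y e)" if "e \<in> E" "e \<noteq> (\<lambda>_. 0)" for e
    unfolding c_def using cfin that by (intro Min_le) auto
  show ?thesis
  proof (intro exI[of _ c] conjI allI impI cpos c1)
    fix d :: "nat \<Rightarrow> int" and R :: real
    assume d0: "\<forall>i. i \<ge> n \<longrightarrow> d i = 0" and dnz: "d \<noteq> (\<lambda>_. 0)" and R: "R \<ge> 1"
       and dR: "\<forall>i<n. real_of_int \<bar>d i\<bar> \<le> R"
    have Ru: "R powr (-u) \<le> 1" using R u by (simp add: powr_minus divide_simps ge_one_powr_ge_zero)
    have Rpos: "R powr (-u) \<ge> 0" by simp
    define d' where "d' = (\<lambda>i. if i \<in> I then d i else 0)"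
    have yd: "y d' = y d" unfolding y_def d'_def by (intro sum.cong) auto
    have Ld: "Lf n b d = y d' + of_int (d 0)" unfolding Lf_def yd unfolding y_def I_def by simp
    show "\<bar>Lf n b d\<bar> \<ge> c * R powr (-u)"
    proof (cases "d' = (\<lambda>_. 0)")
      case True
      have "d 0 \<noteq> 0"
      proof
        assume "d 0 = 0"
        have "d i = 0" for i
        proof -
          consider "i = 0" | "i \<in> I" | "i \<ge> n" using n unfolding I_def by force
          thus ?thesis
          proof cases
            case 2 thus ?thesis using True unfolding d'_def by metis
          qed (use \<open>d 0 = 0\<close> d0 in auto)
        qed
        thus False using dnz by auto
      qed
      hence "\<bar>Lf n b d\<bar> \<ge> 1" using Ld True unfolding y_def by simp
      moreover have "c * R powr (-u) \<le> 1" using c1 Ru cpos Rpos by (metis mult_le_one less_imp_le)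
      ultimately show ?thesis by linarith
    next
      case False
      have d'supp: "\<forall>i. i \<notin> {1..n-1} \<longrightarrow> d' i = 0" unfolding d'_def I_def by auto
      show ?thesis
      proof (cases "d' \<in> E")
        case True
        have "c * R powr (-u) \<le> c" using Ru cpos by (simp add: mult_left_le)
        also have "\<dots> \<le> gval (y d')" using cle True False by simp
        also have "\<dots> \<le> \<bar>Lf n b d\<bar>" unfolding Ld by (rule gval_le)
        finally show ?thesis .
      next
        case notE: False
        define S where "S = supnorm {1..n-1} d'"
        obtain i0 where i0: "i0 \<in> I" "S = real_of_int \<bar>d' i0\<bar>"
          using supnorm_attained[OF I, of d'] unfolding S_def I_def by metis
        have SR: "S \<le> R" using i0 dR unfolding d'_def I_def by auto
        obtain j where j: "d' j \<noteq> 0" using False by auto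
        hence jI: "j \<in> I" unfolding d'_def by (auto split: if_splits)
        have "real_of_int \<bar>d' j\<bar> \<le> S" unfolding S_def I_def
          by (rule supnorm_ge) (use jI I_def in auto)
        moreover have "real_of_int \<bar>d' j\<bar> \<ge> 1" using j by linarith
        ultimately have S1: "S \<ge> 1" by linarith
        have "\<not> \<bar>y d' + of_int (d 0)\<bar> \<le> S powr (-u)"
          using notE d'supp unfolding E_def S_def y_def I_def by blast
        hence "\<bar>Lf n b d\<bar> > S powr (-u)" unfolding Ld by linarith
        moreover have "R powr (-u) \<le> S powr (-u)"
          using S1 SR u by (intro powr_mono2') auto
        moreover have "c * R powr (-u) \<le> R powr (-u)" using c1 Rpos cpos by (simp add: mult_left_le_one_le)
        ultimately show ?thesis by linarith
      qed
    qed
  qed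
qed

lemma harm_le_ln: "n \<ge> 1 \<Longrightarrow> harm n \<le> ln (real n) + (1::real)"
  using euler_mascheroni_sequence_decreasing[of 1 n] by (simp add: harm_def)

lemma fiber_sum:
  fixes F :: "'a set" and L :: "'a \<Rightarrow> real"
  assumes fin: "finite F" and dpos: "\<delta> > 0"
    and lb: "\<And>x. x \<in> F \<Longrightarrow> \<delta> \<le> \<bar>L x\<bar>" and ub: "\<And>x. x \<in> F \<Longrightarrow> \<bar>L x\<bar> \<le> T"
    and sep: "\<And>x y. x \<in> F \<Longrightarrow> y \<in> F \<Longrightarrow> x \<noteq> y \<Longrightarrow> \<delta> \<le> \<bar>L x - L y\<bar>"
  shows "(\<Sum>x\<in>F. 1/\<bar>L x\<bar>) \<le> 2/\<delta> * harm (nat \<lfloor>T/\<delta>\<rfloor>)"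
proof -
  define M where "M = nat \<lfloor>T/\<delta>\<rfloor>"
  define j where "j = (\<lambda>x. nat \<lfloor>\<bar>L x\<bar>/\<delta>\<rfloor>)"
  have jrange: "j ` F \<subseteq> {1..M}"
  proof (rule image_subsetI)
    fix x assume x: "x \<in> F"
    have "1 \<le> \<bar>L x\<bar>/\<delta>" using lb[OF x] dpos by simp
    hence "1 \<le> j x" unfolding j_def by linarith
    moreover have "\<bar>L x\<bar>/\<delta> \<le> T/\<delta>" using ub[OF x] dpos by (simp add: divide_right_mono)
    hence "j x \<le> M" unfolding j_def M_def by (intro nat_mono floor_mono)
    ultimately show "j x \<in> {1..M}" by simp
  qed
  have "(\<Sum>x\<in>F. 1/\<bar>L x\<bar>) = (\<Sum>k\<in>{1..M}. \<Sum>x\<in>{x. x \<in> F \<and> j x = k}. 1/\<bar>L x\<bar>)"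
    by (rule sum.group[symmetric]) (use fin jrange in auto)
  also have "\<dots> \<le> (\<Sum>k\<in>{1..M}. 2/\<delta> * inverse (real k))"
  proof (rule sum_mono)
    fix k assume k: "k \<in> {1..M}"
    define G where "G = {x. x \<in> F \<and> j x = k}"
    have finG: "finite G" using fin unfolding G_def by simp
    have inG: "real k * \<delta> \<le> \<bar>L x\<bar> \<and> \<bar>L x\<bar> < (real k + 1) * \<delta>" if "x \<in> G" for x
    proof -
      have x: "x \<in> F" "nat \<lfloor>\<bar>L x\<bar>/\<delta>\<rfloor> = k" using that unfolding G_def j_def by auto
      have "\<lfloor>\<bar>L x\<bar>/\<delta>\<rfloor> \<ge> 0" using dpos by simp
      hence "\<lfloor>\<bar>L x\<bar>/\<delta>\<rfloor> = int k" using x(2) by linarith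
      hence "real k \<le> \<bar>L x\<bar>/\<delta>" "\<bar>L x\<bar>/\<delta> < real k + 1" by linarith+
      thus ?thesis using dpos by (simp add: field_simps)
    qed
    have one: "card {x\<in>G. s * L x > 0} \<le> 1" if s: "s = 1 \<or> s = -1" for s :: real
    proof -
      have "\<forall>a\<in>{x\<in>G. s * L x > 0}. \<forall>b\<in>{x\<in>G. s * L x > 0}. a = b"
      proof (intro ballI, rule ccontr)
        fix a b assume a: "a \<in> {x\<in>G. s * L x > 0}" and b: "b \<in> {x\<in>G. s * L x > 0}" and ab: "a \<noteq> b"
        have aF: "a \<in> F" "b \<in> F" using a b unfolding G_def by auto
        have sepab: "\<delta> \<le> \<bar>L a - L b\<bar>" using sep[OF aF ab] .
        have ia: "real k * \<delta> \<le> \<bar>L a\<bar>" "\<bar>L a\<bar> < (real k + 1) * \<delta>" using inG[of a] a by auto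
        have ib: "real k * \<delta> \<le> \<bar>L b\<bar>" "\<bar>L b\<bar> < (real k + 1) * \<delta>" using inG[of b] b by auto
        have "\<bar>\<bar>L a\<bar> - \<bar>L b\<bar>\<bar> < \<delta>" using ia ib by (simp add: algebra_simps abs_less_iff)
        moreover have "\<bar>L a - L b\<bar> = \<bar>\<bar>L a\<bar> - \<bar>L b\<bar>\<bar>"
        proof (cases "s = 1")
          case True thus ?thesis using a b by simp
        next
          case False hence "s = -1" using s by simp
          thus ?thesis using a b by simp
        qed
        ultimately have "\<bar>L a - L b\<bar> < \<delta>" by simp
        thus False using sepab by linarith
      qed
      thus ?thesis using finG card_le_Suc0_iff_eq[of "{x\<in>G. s * L x > 0}"] by simp
    qed
    have "G = {x\<in>G. 1 * L x > 0} \<union> {x\<in>G. (-1) * L x > 0}"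
    proof safe
      fix x assume "x \<in> G" "\<not> (-1) * L x > 0"
      moreover have "L x \<noteq> 0" using lb[of x] dpos \<open>x \<in> G\<close> unfolding G_def by auto
      ultimately show "1 * L x > 0" by linarith
    qed
    hence "card G \<le> card {x\<in>G. 1 * L x > 0} + card {x\<in>G. (-1) * L x > 0}"
      by (metis card_Un_le)
    hence cG: "card G \<le> 2" using one[of 1] one[of "-1"] by linarith
    have "(\<Sum>x\<in>G. 1/\<bar>L x\<bar>) \<le> of_nat (card G) * (1/(real k * \<delta>))"
    proof (rule sum_bounded_above)
      fix x assume "x \<in> G"
      hence "real k * \<delta> \<le> \<bar>L x\<bar>" using inG by blast
      moreover have "real k * \<delta> > 0" using k dpos by simp
      ultimately show "1/\<bar>L x\<bar> \<le> 1/(real k * \<delta>)" by (simp add: frac_le)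
    qed
    also have "\<dots> \<le> 2 * (1/(real k * \<delta>))"
      using cG k dpos by (intro mult_right_mono) auto
    also have "\<dots> = 2/\<delta> * inverse (real k)" by (simp add: field_simps)
    finally show "(\<Sum>x\<in>{x. x \<in> F \<and> j x = k}. 1/\<bar>L x\<bar>) \<le> 2/\<delta> * inverse (real k)"
      unfolding G_def .
  qed
  also have "\<dots> = 2/\<delta> * harm M" unfolding harm_def by (simp add: sum_distrib_left)
  finally show ?thesis unfolding M_def .
qed

lemma box_card:
  fixes K :: int and n :: nat assumes K: "K \<ge> 0"
  shows "finite {q::nat\<Rightarrow>int. (\<forall>i. i \<ge> n \<longrightarrow> q i = 0) \<and> (\<forall>i<n. \<bar>q i\<bar> \<le> K)}"
    "card {q::nat\<Rightarrow>int. (\<forall>i. i \<ge> n \<longrightarrow> q i = 0) \<and> (\<forall>i<n. \<bar>q i\<bar> \<le> K)} \<le> nat (2*K+1) ^ n"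
proof -
  define Box where "Box = {q::nat\<Rightarrow>int. (\<forall>i. i \<ge> n \<longrightarrow> q i = 0) \<and> (\<forall>i<n. \<bar>q i\<bar> \<le> K)}"
  define P where "P = PiE {..<n} (\<lambda>_. {-K..K})"
  define g where "g = (\<lambda>f::nat\<Rightarrow>int. \<lambda>i. if i < n then f i else 0)"
  have sub: "Box \<subseteq> g ` P"
  proof
    fix q assume q: "q \<in> Box"
    have "restrict q {..<n} \<in> P" using q unfolding P_def Box_def by (auto simp: abs_le_iff)
    moreover have "g (restrict q {..<n}) = q" using q unfolding g_def Box_def by (auto simp: fun_eq_iff)
    ultimately show "q \<in> g ` P" by (metis image_eqI)
  qed
  have finP: "finite P" unfolding P_def by (intro finite_PiE) auto
  have cP: "card P = nat (2*K+1) ^ n" unfolding P_def by (simp add: card_PiE)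
  show "finite Box" using sub finP finite_surj by blast
  have "card Box \<le> card (g ` P)" using sub finP by (intro card_mono) auto
  also have "\<dots> \<le> card P" using finP by (rule card_image_le)
  finally show "card Box \<le> nat (2*K+1) ^ n" using cP by simp
qed

lemma Lf_diff: "Lf n b q1 - Lf n b q2 = Lf n b (\<lambda>i. q1 i - q2 i)"
  unfolding Lf_def by (simp add: sum_subtractf[symmetric] algebra_simps)

lemma Lf_bound:
  assumes "\<forall>i<n. real_of_int \<bar>q i\<bar> \<le> R" "n \<ge> 2"
  shows "\<bar>Lf n b q\<bar> \<le> R * (1 + (\<Sum>i\<in>{1..n-1}. \<bar>b i\<bar>))"
proof -
  have "\<bar>Lf n b q\<bar> \<le> \<bar>real_of_int (q 0)\<bar> + \<bar>\<Sum>i\<in>{1..n-1}. b i * of_int (q i)\<bar>"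
    unfolding Lf_def by (rule abs_triangle_ineq)
  also have "\<bar>\<Sum>i\<in>{1..n-1}. b i * of_int (q i)\<bar> \<le> (\<Sum>i\<in>{1..n-1}. \<bar>b i\<bar> * R)"
  proof -
    have "\<bar>\<Sum>i\<in>{1..n-1}. b i * of_int (q i)\<bar> \<le> (\<Sum>i\<in>{1..n-1}. \<bar>b i * of_int (q i)\<bar>)"
      by (rule sum_abs)
    also have "\<dots> \<le> (\<Sum>i\<in>{1..n-1}. \<bar>b i\<bar> * R)"
    proof (rule sum_mono)
      fix i assume "i \<in> {1..n-1}"
      hence "i < n" using assms(2) by auto
      hence "\<bar>of_int (q i)::real\<bar> \<le> R" using assms(1) by simp
      thus "\<bar>b i * of_int (q i)\<bar> \<le> \<bar>b i\<bar> * R" by (simp add: abs_mult mult_left_mono)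
    qed
    finally show ?thesis .
  qed
  also have "\<bar>real_of_int (q 0)\<bar> \<le> R" using assms by auto
  finally show ?thesis by (simp add: algebra_simps sum_distrib_left)
qed

lemma main_Q:
  assumes n: "n \<ge> 2" and Q: "Q > 1" and v: "v > 0" and c: "c > 0" "c \<le> 1" and u: "u > 0"
    and cb: "\<And>d R. \<forall>i. i \<ge> n \<longrightarrow> d i = 0 \<Longrightarrow> d \<noteq> (\<lambda>_. 0) \<Longrightarrow> R \<ge> 1 \<Longrightarrow>
               \<forall>i<n. real_of_int \<bar>d i\<bar> \<le> R \<Longrightarrow> \<bar>Lf n b d\<bar> \<ge> c * R powr (-u)"
  defines "\<delta> \<equiv> c * (4*Q) powr (-u)" and "B \<equiv> 1 + (\<Sum>i\<in>{1..n-1}. \<bar>b i\<bar>)"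
  shows "measure lebesgue (A_set n b v Q)
     \<le> 4 * (5*Q)^n * Q powr (-v) + 12/\<delta> * Q powr (-v) * (ln (2*Q*B/\<delta>) + 1)"
proof -
  define \<epsilon> where "\<epsilon> = Q powr (-v)"
  have Qv: "Q powr v \<ge> 1" using Q v by (intro ge_one_powr_ge_zero) auto
  have e0: "0 < \<epsilon>" unfolding \<epsilon>_def using Q by simp
  have e1: "\<epsilon> \<le> 1" unfolding \<epsilon>_def using Qv by (simp add: powr_minus divide_simps)
  define K where "K = \<lfloor>2*Q\<rfloor>"
  have K0: "K \<ge> 0" unfolding K_def using Q by simp
  have KQ: "real_of_int K \<le> 2*Q" unfolding K_def by simp
  define Box where "Box = {q::nat\<Rightarrow>int. (\<forall>i. i \<ge> n \<longrightarrow> q i = 0) \<and> (\<forall>i<n. \<bar>q i\<bar> \<le> K)}"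
  define Box' where "Box' = Box - {\<lambda>_. 0}"
  have finBox: "finite Box" "card Box \<le> nat (2*K+1) ^ n" using box_card[OF K0, of n] unfolding Box_def by auto
  have finBox': "finite Box'" using finBox unfolding Box'_def by simp
  define L where "L = Lf n b"
  have Qu: "(4*Q) powr u \<ge> 1" using Q u by (intro ge_one_powr_ge_zero) auto
  have dpos: "\<delta> > 0" unfolding \<delta>_def using c Q by simp
  have dle: "\<delta> \<le> 1"
  proof -
    have "(4*Q) powr (-u) \<le> 1" using Qu by (simp add: powr_minus divide_simps)
    thus ?thesis unfolding \<delta>_def using c by (metis mult_le_one less_imp_le powr_ge_zero)
  qed
  have B1: "B \<ge> 1" unfolding B_def by (simp add: sum_nonneg)
  have boxR: "\<forall>i<n. real_of_int \<bar>q i\<bar> \<le> 2*Q" if "q \<in> Box" for q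
  proof (intro allI impI)
    fix i assume "i < n"
    hence "\<bar>q i\<bar> \<le> K" using that unfolding Box_def by auto
    hence "real_of_int \<bar>q i\<bar> \<le> real_of_int K" by linarith
    thus "real_of_int \<bar>q i\<bar> \<le> 2*Q" using KQ by linarith
  qed
  have lb: "\<delta> \<le> \<bar>L q\<bar>" if q: "q \<in> Box'" for q
  proof -
    have "\<forall>i<n. real_of_int \<bar>q i\<bar> \<le> 4*Q" using boxR[of q] q Q unfolding Box'_def by force
    moreover have "\<forall>i. i \<ge> n \<longrightarrow> q i = 0" "q \<noteq> (\<lambda>_. 0)" using q unfolding Box'_def Box_def by auto
    ultimately show ?thesis unfolding L_def \<delta>_def using cb[of q "4*Q"] Q by auto
  qed
  have sep: "\<delta> \<le> \<bar>L q1 - L q2\<bar>" if q: "q1 \<in> Box'" "q2 \<in> Box'" "q1 \<noteq> q2" for q1 q2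
  proof -
    define d where "d = (\<lambda>i. q1 i - q2 i)"
    have "\<forall>i<n. real_of_int \<bar>d i\<bar> \<le> 4*Q"
    proof (intro allI impI)
      fix i assume i: "i < n"
      have "real_of_int \<bar>q1 i\<bar> \<le> 2*Q" "real_of_int \<bar>q2 i\<bar> \<le> 2*Q"
        using boxR[of q1] boxR[of q2] q i unfolding Box'_def by auto
      moreover have "\<bar>d i\<bar> \<le> \<bar>q1 i\<bar> + \<bar>q2 i\<bar>" unfolding d_def by linarith
      ultimately show "real_of_int \<bar>d i\<bar> \<le> 4*Q" by linarith
    qed
    moreover have "\<forall>i. i \<ge> n \<longrightarrow> d i = 0" using q unfolding Box'_def Box_def d_def by auto
    moreover have "d \<noteq> (\<lambda>_. 0)"
    proof
      assume "d = (\<lambda>_. 0)"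
      hence "q1 = q2" unfolding d_def by (auto simp: fun_eq_iff dest: fun_cong)
      thus False using q by simp
    qed
    ultimately have "c * (4*Q) powr (-u) \<le> \<bar>Lf n b d\<bar>" using cb[of d "4*Q"] Q by auto
    thus ?thesis unfolding L_def d_def \<delta>_def Lf_diff .
  qed
  have ub: "\<bar>L q\<bar> \<le> 2*Q*B" if q: "q \<in> Box'" for q
    using Lf_bound[OF boxR n, of q b] q unfolding L_def B_def Box'_def by auto
  define M where "M = nat \<lfloor>2*Q*B/\<delta>\<rfloor>"
  have sum1: "(\<Sum>q\<in>Box'. 1/\<bar>L q\<bar>) \<le> 2/\<delta> * harm M"
    unfolding M_def by (rule fiber_sum[OF finBox' dpos lb ub sep])
  have big: "2*Q*B/\<delta> \<ge> 1"
  proof -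
    have "2*Q*B \<ge> 1" using Q B1 by (metis less_imp_le mult_ge1_I one_le_numeral order.trans le_less_trans less_imp_le order_refl mult_right_mono) 
    thus ?thesis using dle dpos by (simp add: divide_simps)
  qed
  have M1: "M \<ge> 1" unfolding M_def using big by linarith
  have "harm M \<le> ln (real M) + (1::real)" using harm_le_ln[OF M1] .
  also have "ln (real M) \<le> ln (2*Q*B/\<delta>)"
  proof -
    have "real M \<le> 2*Q*B/\<delta>" unfolding M_def using big by linarith
    thus ?thesis using M1 by (subst ln_le_cancel_iff) auto
  qed
  finally have hM: "harm M \<le> ln (2*Q*B/\<delta>) + (1::real)" by simp
  define U where "U = (\<lambda>lv::real. \<Union>p\<in>{-(\<lfloor>\<bar>lv\<bar>\<rfloor> + 1)..\<lfloor>\<bar>lv\<bar>\<rfloor> + 1}. {-real_of_int p / lv - \<epsilon>/\<bar>lv\<bar> .. -real_of_int p/lv + \<epsilon>/\<bar>lv\<bar>})"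
  have Lnz: "L q \<noteq> 0" if "q \<in> Box'" for q using lb[OF that] dpos by auto
  have sb1: "U (L q) \<in> lmeasurable" if "q \<in> Box'" for q
    unfolding U_def using strip_bound(1)[OF Lnz[OF that] e0 e1] by (simp only:)
  have sb2: "measure lebesgue (U (L q)) \<le> 4*\<epsilon> + 6*\<epsilon>/\<bar>L q\<bar>" if "q \<in> Box'" for q
    unfolding U_def using strip_bound(2)[OF Lnz[OF that] e0 e1] by (simp only:)
  have sb3: "{x\<in>{0..<1}. \<exists>p::int. \<bar>of_int p + L q*x\<bar> < \<epsilon>} \<subseteq> U (L q)" if "q \<in> Box'" for q
    unfolding U_def using strip_bound(3)[OF Lnz[OF that] e0 e1] by (simp only:)
  define V where "V = (\<Union>q\<in>Box'. U (L q))"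
  have Vm: "V \<in> lmeasurable" unfolding V_def by (rule fmeasurable.finite_UN[OF finBox']) (rule sb1)
  have AV: "A_set n b v Q \<subseteq> V"
  proof
    fix x assume "x \<in> A_set n b v Q"
    then obtain p q where x: "x \<in> {0..<1}" and q0: "\<forall>i. i \<ge> n \<longrightarrow> q i = 0"
      and sQ: "Q \<le> supnorm {0..<n} q" "supnorm {0..<n} q < 2 * Q"
      and pq: "\<bar>of_int p + (of_int (q 0) + (\<Sum>i\<in>{1..n-1}. b i * of_int (q i))) * x\<bar> < Q powr (- v)"
      unfolding A_set_def by blast
    have qK: "\<forall>i<n. \<bar>q i\<bar> \<le> K"
    proof (intro allI impI)
      fix i assume "i < n"
      hence "real_of_int \<bar>q i\<bar> \<le> supnorm {0..<n} q" by (intro supnorm_ge) auto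
      hence "real_of_int \<bar>q i\<bar> \<le> 2*Q" using sQ by linarith
      thus "\<bar>q i\<bar> \<le> K" unfolding K_def by (simp add: le_floor_iff)
    qed
    have "q \<noteq> (\<lambda>_. 0)"
    proof
      assume "q = (\<lambda>_. 0)"
      hence "supnorm {0..<n} q = 0" unfolding supnorm_def using n by simp
      thus False using sQ Q by linarith
    qed
    hence qB: "q \<in> Box'" using q0 qK unfolding Box'_def Box_def by auto
    have "\<bar>of_int p + L q * x\<bar> < \<epsilon>" using pq unfolding L_def Lf_def \<epsilon>_def by simp
    hence "x \<in> {x\<in>{0..<1}. \<exists>p::int. \<bar>of_int p + L q * x\<bar> < \<epsilon>}"
      using x by blast
    hence "x \<in> U (L q)" using sb3[OF qB] by blast
    thus "x \<in> V" unfolding V_def using qB by blast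
  qed
  have cardb: "real (card Box') \<le> (5*Q)^n"
  proof -
    have "card Box' \<le> card Box" unfolding Box'_def using finBox by (intro card_mono) auto
    hence "real (card Box') \<le> real (nat (2*K+1) ^ n)" using finBox(2) by linarith
    also have "\<dots> = (real_of_int (2*K+1))^n" using K0 by simp
    also have "\<dots> \<le> (5*Q)^n" using K0 KQ Q by (intro power_mono) auto
    finally show "real (card Box') \<le> (5*Q)^n" .
  qed
  have sumb: "(\<Sum>q\<in>Box'. 1/\<bar>L q\<bar>) \<le> 2/\<delta> * (ln (2*Q*B/\<delta>) + 1)"
  proof -
    have "2/\<delta> * harm M \<le> 2/\<delta> * (ln (2*Q*B/\<delta>) + 1)"
      by (rule mult_left_mono[OF hM]) (use dpos in simp)
    thus ?thesis by (rule order.trans[OF sum1])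
  qed
  have "measure lebesgue V \<le> (\<Sum>q\<in>Box'. measure lebesgue (U (L q)))"
    unfolding V_def using sb1 finBox' by (intro measure_UNION_le) auto
  also have "\<dots> \<le> (\<Sum>q\<in>Box'. 4*\<epsilon> + 6*\<epsilon>/\<bar>L q\<bar>)"
    by (rule sum_mono) (rule sb2)
  also have "\<dots> = 4*\<epsilon> * real (card Box') + 6*\<epsilon> * (\<Sum>q\<in>Box'. 1/\<bar>L q\<bar>)"
    by (simp add: sum.distrib sum_distrib_left)
  also have "\<dots> \<le> 4*\<epsilon> * (5*Q)^n + 6*\<epsilon> * (2/\<delta> * (ln (2*Q*B/\<delta>) + 1))"
    by (intro add_mono mult_left_mono cardb sumb) (use e0 in auto)
  also have "\<dots> = 4 * (5*Q)^n * Q powr (-v) + 12/\<delta> * Q powr (-v) * (ln (2*Q*B/\<delta>) + 1)"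
    unfolding \<epsilon>_def by (simp add: algebra_simps add_divide_distrib)
  finally have mV: "measure lebesgue V \<le> 4 * (5*Q)^n * Q powr (-v) + 12/\<delta> * Q powr (-v) * (ln (2*Q*B/\<delta>) + 1)" .
  show ?thesis
  proof (cases "A_set n b v Q \<in> sets lebesgue")
    case True
    have "measure lebesgue (A_set n b v Q) \<le> measure lebesgue V"
      using AV True Vm by (rule measure_mono_fmeasurable)
    thus ?thesis using mV by linarith
  next
    case False
    hence "measure lebesgue (A_set n b v Q) = 0" by (rule measure_notin_sets)
    moreover have "0 \<le> measure lebesgue V" by simp
    ultimately show ?thesis using mV by linarith
  qed
qed

theorem lemma4p8:
  fixes n :: nat and b :: "nat \<Rightarrow> real" and v :: real
  assumes "n \<ge> 2" and "\<not> W_plus n b" and "v > real n"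
  shows "\<exists>C > 0. \<forall>Q > 1. measure lebesgue (A_set n b v Q) < C * Q powr ((real n - v) / 2)"
proof -
  define u where "u = (3*real n + v)/4"
  define w where "w = (v - real n)/4"
  have un: "u > real n" using assms(3) unfolding u_def by simp
  have u0: "u > 0" using un assms(1) by simp
  have w0: "w > 0" using assms(3) unfolding w_def by simp
  have v0: "v > 0" using assms(1,3) by simp
  have nW: "\<not> W_u n u b" using assms(2) un unfolding W_plus_def by blast
  obtain c where c: "c > 0" "c \<le> 1" and cb: "\<forall>d R. (\<forall>i. i \<ge> n \<longrightarrow> d i = 0) \<longrightarrow> d \<noteq> (\<lambda>_. 0) \<longrightarrow> R \<ge> 1 \<longrightarrow>
            (\<forall>i<n. real_of_int \<bar>d i\<bar> \<le> R) \<longrightarrow> \<bar>Lf n b d\<bar> \<ge> c * R powr (-u)"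
    using dioph[OF assms(1) nW u0] by blast
  have cb': "\<And>d R. \<forall>i. i \<ge> n \<longrightarrow> d i = 0 \<Longrightarrow> d \<noteq> (\<lambda>_. 0) \<Longrightarrow> R \<ge> 1 \<Longrightarrow>
               \<forall>i<n. real_of_int \<bar>d i\<bar> \<le> R \<Longrightarrow> \<bar>Lf n b d\<bar> \<ge> c * R powr (-u)"
    using cb by blast
  define B where "B = 1 + (\<Sum>i\<in>{1..n-1}. \<bar>b i\<bar>)"
  have B1: "B \<ge> 1" unfolding B_def by (simp add: sum_nonneg)
  define a where "a = \<bar>ln (2*B*4 powr u/c)\<bar> + 1"
  have a0: "a \<ge> 0" unfolding a_def by simp
  define D where "D = 12 * 4 powr u / c * (a + (1+u)/w)"
  have D0: "D \<ge> 0" unfolding D_def using c a0 w0 u0 by simp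
  define C where "C = 4*5^n + D + 1"
  have "(0::real) \<le> 4*5^n" by simp
  hence Cpos: "C > 0" unfolding C_def using D0 by linarith
  show ?thesis
  proof (intro exI[of _ C] conjI allI impI Cpos)
    fix Q :: real assume Q: "Q > 1"
    define \<delta> where "\<delta> = c * (4*Q) powr (-u)"
    define E where "E = Q powr ((real n - v) / 2)"
    have E0: "E > 0" unfolding E_def using Q by simp
    have mQ: "measure lebesgue (A_set n b v Q)
       \<le> 4 * (5*Q)^n * Q powr (-v) + 12/\<delta> * Q powr (-v) * (ln (2*Q*B/\<delta>) + 1)"
      unfolding \<delta>_def B_def by (rule main_Q[OF assms(1) Q v0 c u0 cb'])
    have T1: "4 * (5*Q)^n * Q powr (-v) \<le> 4*5^n * E"
    proof -
      have "Q powr (real n - v) = Q powr (real n) * Q powr (-v)" by (simp add: powr_add[symmetric])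
      also have "Q powr (real n) = Q^n" using Q by (simp add: powr_realpow)
      finally have e1: "Q powr (real n - v) = Q^n * Q powr (-v)" .
      have "Q powr (real n - v) \<le> E" unfolding E_def by (rule powr_mono) (use assms(3) Q in auto)
      hence "(5*Q)^n * Q powr (-v) \<le> 5^n * E" using e1 by (simp add: power_mult_distrib)
      thus ?thesis by simp
    qed
    have Qu: "(4*Q) powr u = 4 powr u * Q powr u" by (rule powr_mult)
    have id: "1/\<delta> = 4 powr u / c * Q powr u" unfolding \<delta>_def powr_minus Qu using c Q
      by (simp add: field_simps)
    have lnQ: "ln Q \<le> Q powr w / w"
    proof -
      have "ln (Q powr w) \<le> Q powr w - 1" using Q by (intro ln_le_minus_one) simp
      hence "w * ln Q \<le> Q powr w" by simp
      thus ?thesis using w0 by (simp add: field_simps)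
    qed
    have Qw1: "Q powr w \<ge> 1" using Q w0 by (intro ge_one_powr_ge_zero) auto
    have lnb: "ln (2*Q*B/\<delta>) + 1 \<le> (a + (1+u)/w) * Q powr w"
    proof -
      have "2*Q*B/\<delta> = 2*Q*B*(1/\<delta>)" by simp
      also have "\<dots> = 2*Q*B*(4 powr u / c * Q powr u)" by (simp only: id)
      also have "\<dots> = (2*B*4 powr u/c) * (Q * Q powr u)" by (simp add: algebra_simps)
      also have "Q * Q powr u = Q powr (1+u)" using Q by (simp add: powr_add)
      finally have "2*Q*B/\<delta> = (2*B*4 powr u/c) * Q powr (1+u)" .
      hence "ln (2*Q*B/\<delta>) = ln ((2*B*4 powr u/c) * Q powr (1+u))" by (simp only:)
      also have "\<dots> = ln (2*B*4 powr u/c) + ln (Q powr (1+u))"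
      proof (rule ln_mult_pos)
        show "0 < 2*B*4 powr u/c" using B1 c by simp
        show "0 < Q powr (1+u)" using Q by simp
      qed
      also have "ln (Q powr (1+u)) = (1+u) * ln Q" by simp
      finally have "ln (2*Q*B/\<delta>) = ln (2*B*4 powr u/c) + (1+u) * ln Q" .
      also have "\<dots> \<le> (a - 1) + (1+u) * (Q powr w / w)"
        using lnQ u0 unfolding a_def by (intro add_mono mult_left_mono) auto
      finally have "ln (2*Q*B/\<delta>) + 1 \<le> a + (1+u)/w * Q powr w" by simp
      also have "\<dots> \<le> a * Q powr w + (1+u)/w * Q powr w"
        using a0 Qw1 by (simp add: mult_le_cancel_left1)
      finally show ?thesis by (simp add: algebra_simps)
    qed
    have T2: "12/\<delta> * Q powr (-v) * (ln (2*Q*B/\<delta>) + 1) \<le> D * E"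
    proof -
      have "12/\<delta> * Q powr (-v) * (ln (2*Q*B/\<delta>) + 1) = 12*(1/\<delta>) * Q powr (-v) * (ln (2*Q*B/\<delta>) + 1)"
        by simp
      also have "\<dots> = 12*(4 powr u / c * Q powr u) * Q powr (-v) * (ln (2*Q*B/\<delta>) + 1)"
        by (simp only: id)
      also have "\<dots> = 12 * 4 powr u / c * (Q powr u * Q powr (-v)) * (ln (2*Q*B/\<delta>) + 1)"
        by (simp add: algebra_simps)
      also have "\<dots> \<le> 12 * 4 powr u / c * (Q powr u * Q powr (-v)) * ((a + (1+u)/w) * Q powr w)"
        using lnb c by (intro mult_left_mono) auto
      also have "\<dots> = D * (Q powr u * Q powr (-v) * Q powr w)" unfolding D_def by (simp add: algebra_simps)
      also have "Q powr u * Q powr (-v) * Q powr w = E"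
      proof -
        have ex: "u + -v + w = (real n - v)/2" unfolding u_def w_def by (simp add: field_simps)
        have "Q powr u * Q powr (-v) * Q powr w = Q powr (u + -v + w)" by (simp only: powr_add)
        thus ?thesis unfolding E_def ex .
      qed
      finally show ?thesis .
    qed
    have "measure lebesgue (A_set n b v Q) \<le> 4*5^n * E + D * E" using mQ T1 T2 by linarith
    also have "\<dots> < C * E" unfolding C_def using E0 by (simp add: algebra_simps)
    finally show "measure lebesgue (A_set n b v Q) < C * Q powr ((real n - v) / 2)" unfolding E_def .
  qed
qed

end
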